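(* At every time during the execution of DASH (described in the context) on an initially connected graph, against any sequence of node deletions, the graph $G'$ formed by the surviving nodes and the healing edges added by DASH is a forest.
   Context: Model: a network is an undirected graph. Initially it is a connected graph $G_0$ on $n$ nodes. In each round an adversary deletes one surviving node $v$ together with its incident edges, and then DASH adds edges. $G$ denotes the current network; $E'$ is the set of healing edges added so far by DASH whose endpoints both survive; $G'=(V(G),E')$. $N(u,G)$, $N(u,G')$ denote neighbor sets in $G$, $G'$; $\delta(u)=\deg_G(u)-\deg_{G_0}(u)$. DASH: initially every node receives an ID drawn independently and uniformly from $[0,1]$ (its initial ID). When $v$ is deleted (quantities evaluated just before the deletion): partition the nodes of $N(v,G)$ whose current ID differs from that of $v$ into classes of equal current ID, and let $UN(v,G)$ consist of one node per class, the one with lowest initial ID. Let $S=UN(v,G)\cup N(v,G')$. Order $S$ by increasing $\delta$ and place the nodes in this order into a complete binary tree with $|S|$ positions, filled level by level from the top and left to right; add to the network and to $E'$ the edge between each node of $S$ and the node at its parent position. Then all nodes of the connected component of $G'$ containing $S$ set their ID to the minimum current ID among nodes of $S$. *)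

theory Defs
  imports Complex_Main
begin

text \<open>Simple undirected graphs: an edge is a two-element set of nodes.\<close>

definition adj :: "'a set set \<Rightarrow> ('a \<times> 'a) set" where
  "adj E = {(x, y). {x, y} \<in> E \<and> x \<noteq> y}"

definition nbrs :: "'a set set \<Rightarrow> 'a \<Rightarrow> 'a set" where
  "nbrs E u = {w. w \<noteq> u \<and> {u, w} \<in> E}"

definition wf_graph :: "'a set \<Rightarrow> 'a set set \<Rightarrow> bool" where
  "wf_graph V E \<longleftrightarrow> (\<forall>e\<in>E. \<exists>x y. x \<noteq> y \<and> e = {x, y} \<and> x \<in> V \<and> y \<in> V)"

definition connected_graph :: "'a set \<Rightarrow> 'a set set \<Rightarrow> bool" where
  "connected_graph V E \<longleftrightarrow> (\<forall>x\<in>V. \<forall>y\<in>V. (x, y) \<in> (adj E)\<^sup>*)"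

definition is_cycle :: "'a set set \<Rightarrow> 'a list \<Rightarrow> bool" where
  "is_cycle E c \<longleftrightarrow> length c \<ge> 3 \<and> distinct c \<and>
     (\<forall>i. Suc i < length c \<longrightarrow> {c ! i, c ! Suc i} \<in> E) \<and> {last c, hd c} \<in> E"

definition is_forest :: "'a set \<Rightarrow> 'a set set \<Rightarrow> bool" where
  "is_forest V E \<longleftrightarrow> wf_graph V E \<and> \<not> (\<exists>c. is_cycle E c)"

definition deg :: "'a set set \<Rightarrow> 'a \<Rightarrow> nat" where
  "deg E u = card {e\<in>E. u \<in> e}"

record 'a dash_state =
  nodes :: "'a set"
  gedges :: "'a set set"
  hedges :: "'a set set"     (* E': surviving healing edges *)
  cid :: "'a \<Rightarrow> real"

text \<open>Un_set(v,G): one node per class of equal current ID among the candidates, namely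
  one with lowest initial ID in its class.\<close>
definition is_UN :: "'a set \<Rightarrow> ('a \<Rightarrow> real) \<Rightarrow> ('a \<Rightarrow> real) \<Rightarrow> 'a set \<Rightarrow> bool" where
  "is_UN Cand idf init Un_set \<longleftrightarrow> Un_set \<subseteq> Cand \<and>
     (\<forall>u\<in>Cand. \<exists>w\<in>Un_set. idf w = idf u) \<and>
     (\<forall>w1\<in>Un_set. \<forall>w2\<in>Un_set. idf w1 = idf w2 \<longrightarrow> w1 = w2) \<and>
     (\<forall>w\<in>Un_set. \<forall>u\<in>Cand. idf u = idf w \<longrightarrow> init w \<le> init u)"

text \<open>Edges of the complete binary tree with positions 0..length s - 1 filled level by level:
  the parent of (0-indexed) position i > 0 is (i - 1) div 2.\<close>
definition tree_edges :: "'a list \<Rightarrow> 'a set set" where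
  "tree_edges s = {{s ! i, s ! ((i - 1) div 2)} | i. 0 < i \<and> i < length s}"

text \<open>One DASH round: the adversary deletes v from state st, DASH may produce st'
  (nondeterminism only in tie-breaking).\<close>
definition dash_step :: "'a set set \<Rightarrow> ('a \<Rightarrow> real) \<Rightarrow> 'a dash_state \<Rightarrow> 'a \<Rightarrow> 'a dash_state \<Rightarrow> bool" where
  "dash_step E0 init st v st' \<longleftrightarrow> v \<in> nodes st \<and>
    (\<exists>Un_set s. let G = gedges st; H = hedges st; idf = cid st;
               \<delta> = (\<lambda>u. int (deg G u) - int (deg E0 u));
               S = Un_set \<union> nbrs H v;
               T = tree_edges s;
               V' = nodes st - {v};
               H' = {e\<in>H. v \<notin> e} \<union> T;
               comp = {u\<in>V'. \<exists>w\<in>S. (w, u) \<in> (adj H')\<^sup>*}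
           in is_UN {u\<in>nbrs G v. idf u \<noteq> idf v} idf init Un_set \<and>
              distinct s \<and> set s = S \<and> sorted_wrt (\<lambda>a b. \<delta> a \<le> \<delta> b) s \<and>
              st' = \<lparr> nodes = V', gedges = {e\<in>G. v \<notin> e} \<union> T, hedges = H',
                      cid = (\<lambda>u. if u \<in> comp then Min (idf ` S) else idf u) \<rparr>)"

inductive dash_reach :: "'a set \<Rightarrow> 'a set set \<Rightarrow> ('a \<Rightarrow> real) \<Rightarrow> 'a dash_state \<Rightarrow> bool"
  for V0 E0 init where
  init: "dash_reach V0 E0 init \<lparr> nodes = V0, gedges = E0, hedges = {}, cid = init \<rparr>"
| step: "dash_reach V0 E0 init st \<Longrightarrow> dash_step E0 init st v st' \<Longrightarrow> dash_reach V0 E0 init st'"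

end

theory Submission imports Defs begin

definition AB :: "'a set set \<Rightarrow> bool" where
  "AB E \<longleftrightarrow> (\<forall>e\<in>E. \<forall>x y. e = {x,y} \<longrightarrow> x \<noteq> y \<longrightarrow> (x,y) \<notin> (adj (E - {e}))\<^sup>*)"

lemma adj_iff: "(x,y) \<in> adj E \<longleftrightarrow> {x,y} \<in> E \<and> x \<noteq> y"
  by (simp add: adj_def)

lemma sym_adj: "sym (adj E)"
  by (auto simp: sym_def adj_def insert_commute)

lemma reach_sym: "(x,y) \<in> (adj E)\<^sup>* \<Longrightarrow> (y,x) \<in> (adj E)\<^sup>*"
  by (meson sym_adj sym_rtrancl symD)

lemma reach_mono: "E \<subseteq> F \<Longrightarrow> (x,y) \<in> (adj E)\<^sup>* \<Longrightarrow> (x,y) \<in> (adj F)\<^sup>*"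
proof -
  assume "E \<subseteq> F" "(x,y) \<in> (adj E)\<^sup>*"
  moreover have "adj E \<subseteq> adj F" using \<open>E \<subseteq> F\<close> by (auto simp: adj_def)
  ultimately show ?thesis by (meson rtrancl_mono subsetD)
qed

lemma reach_insert:
  assumes "(x,y) \<in> (adj (insert {a,b} E))\<^sup>*"
  shows "(x,y) \<in> (adj E)\<^sup>* \<or> ((x,a)\<in>(adj E)\<^sup>* \<and> (b,y)\<in>(adj E)\<^sup>*) \<or> ((x,b)\<in>(adj E)\<^sup>* \<and> (a,y)\<in>(adj E)\<^sup>*)"
  using assms
proof (induction rule: rtrancl_induct)
  case base then show ?case by simp
next
  case (step y z)
  from step.hyps(2) have yz: "{y,z} \<in> insert {a,b} E" "y \<noteq> z" by (auto simp: adj_def)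
  show ?case
  proof (cases "{y,z} \<in> E")
    case True
    then have "(y,z) \<in> adj E" using yz by (simp add: adj_def)
    then show ?thesis using step.IH by (meson rtrancl.rtrancl_into_rtrancl)
  next
    case False
    then have "(y = a \<and> z = b) \<or> (y = b \<and> z = a)" using yz by (auto simp: doubleton_eq_iff)
    then show ?thesis using step.IH by (metis reach_sym rtrancl.rtrancl_refl rtrancl_trans)
  qed
qed

lemma AB_insert:
  assumes ab: "AB E" and nc: "(a,b) \<notin> (adj E)\<^sup>*" and "a \<noteq> b"
  shows "AB (insert {a,b} E)"
  unfolding AB_def
proof (intro ballI allI impI notI)
  fix e x y
  assume e: "e \<in> insert {a,b} E" "e = {x,y}" "x \<noteq> y" and r: "(x,y) \<in> (adj (insert {a,b} E - {e}))\<^sup>*"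
  show False
  proof (cases "e = {a,b}")
    case True
    then have "(x,y) \<in> (adj E)\<^sup>*" using r by (rule_tac reach_mono[of "insert {a,b} E - {e}"]) auto
    then show False using nc True e by (metis doubleton_eq_iff reach_sym)
  next
    case False
    then have eE: "e \<in> E" using e by auto
    have "insert {a,b} E - {e} = insert {a,b} (E - {e})" using False by auto
    with r have "(x,y) \<in> (adj (E-{e}))\<^sup>* \<or> ((x,a)\<in>(adj (E-{e}))\<^sup>* \<and> (b,y)\<in>(adj (E-{e}))\<^sup>*) \<or> ((x,b)\<in>(adj (E-{e}))\<^sup>* \<and> (a,y)\<in>(adj (E-{e}))\<^sup>*)"
      using reach_insert by metis
    moreover have "(x,y) \<notin> (adj (E-{e}))\<^sup>*" using ab eE e unfolding AB_def by blast
    moreover have sub: "\<And>p q. (p,q) \<in> (adj (E-{e}))\<^sup>* \<Longrightarrow> (p,q) \<in> (adj E)\<^sup>*"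
      by (rule reach_mono) auto
    moreover have "(x,y) \<in> (adj E)\<^sup>*" using eE e by (intro r_into_rtrancl) (simp add: adj_def)
    ultimately show False using nc by (metis reach_sym rtrancl_trans)
  qed
qed

lemma cycle_not_AB:
  assumes c: "is_cycle E c" shows "\<not> AB E"
proof
  assume ab: "AB E"
  let ?n = "length c"
  let ?e = "{last c, hd c}"
  have n: "?n \<ge> 3" and d: "distinct c" and ed: "\<And>i. Suc i < ?n \<Longrightarrow> {c!i, c!Suc i} \<in> E"
    and eE: "?e \<in> E" using c by (auto simp: is_cycle_def)
  have hd: "hd c = c!0" using n by (intro hd_conv_nth) auto
  have lst: "last c = c!(?n - 1)" using n by (intro last_conv_nth) auto
  have "\<forall>i. i < ?n \<longrightarrow> (c!0, c!i) \<in> (adj (E - {?e}))\<^sup>*"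
  proof (intro allI)
    fix i show "i < ?n \<longrightarrow> (c!0, c!i) \<in> (adj (E - {?e}))\<^sup>*"
    proof (induction i)
      case 0 then show ?case by simp
    next
      case (Suc i)
      show ?case
      proof
        assume si: "Suc i < ?n"
        have ne: "c!i \<noteq> c!Suc i" using d si by (simp add: nth_eq_iff_index_eq)
        have "{c!i, c!Suc i} \<noteq> ?e"
        proof
          assume "{c!i, c!Suc i} = ?e"
          then have "(c!i = c!(?n-1) \<and> c!Suc i = c!0) \<or> (c!i = c!0 \<and> c!Suc i = c!(?n-1))"
            using hd lst by (auto simp: doubleton_eq_iff)
          moreover have cne: "c \<noteq> []" "i < ?n" "?n - 1 < ?n" using n si by auto
          moreover have "c!i = c!0 \<longleftrightarrow> i = 0" "c!Suc i = c!0 \<longleftrightarrow> Suc i = 0"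
            "c!i = c!(?n-1) \<longleftrightarrow> i = ?n-1" "c!Suc i = c!(?n-1) \<longleftrightarrow> Suc i = ?n-1"
            using nth_eq_iff_index_eq[OF d, of i 0] nth_eq_iff_index_eq[OF d, of "Suc i" 0]
              nth_eq_iff_index_eq[OF d, of i "?n-1"] nth_eq_iff_index_eq[OF d, of "Suc i" "?n-1"] cne si by auto
          ultimately have "(i = ?n-1 \<and> Suc i = 0) \<or> (i = 0 \<and> Suc i = ?n-1)" by metis
          then show False using n by arith
        qed
        then have "(c!i, c!Suc i) \<in> adj (E - {?e})" using ed[OF si] ne by (simp add: adj_def)
        then show "(c!0, c!Suc i) \<in> (adj (E - {?e}))\<^sup>*" using Suc si
          by (meson Suc_lessD rtrancl.rtrancl_into_rtrancl)
      qed
    qed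
  qed
  then have "(hd c, last c) \<in> (adj (E - {?e}))\<^sup>*" using hd lst n by simp
  moreover have "c \<noteq> []" "0 < ?n" "?n - 1 < ?n" "0 \<noteq> ?n - 1" using n by auto
  then have "hd c \<noteq> last c" using hd lst nth_eq_iff_index_eq[OF d, of 0 "?n-1"] by metis
  ultimately show False using ab eE unfolding AB_def by (metis insert_commute)
qed


definition Ti :: "'a list \<Rightarrow> nat \<Rightarrow> 'a set set" where
  "Ti s i = {{s ! j, s ! ((j - 1) div 2)} | j. 0 < j \<and> j < i}"

lemma Ti_0: "Ti s 0 = {}" and Ti_1: "Ti s (Suc 0) = {}"
  by (auto simp: Ti_def)

lemma Ti_Suc: "0 < i \<Longrightarrow> Ti s (Suc i) = insert {s ! i, s ! ((i - 1) div 2)} (Ti s i)"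
  by (auto simp: Ti_def less_Suc_eq)

lemma Ti_full: "Ti s (length s) = tree_edges s"
  by (simp add: Ti_def tree_edges_def)

lemma tree_add:
  assumes ab: "AB E" and d: "distinct s"
    and sep: "\<forall>k j. k < length s \<longrightarrow> j < length s \<longrightarrow> j \<noteq> k \<longrightarrow> (s!k, s!j) \<notin> (adj E)\<^sup>*"
  shows "AB (E \<union> tree_edges s)"
proof -
  have "\<forall>i. i \<le> length s \<longrightarrow> AB (E \<union> Ti s i) \<and>
     (\<forall>k j. i \<le> k \<longrightarrow> k < length s \<longrightarrow> j < length s \<longrightarrow> j \<noteq> k \<longrightarrow> (s!k, s!j) \<notin> (adj (E \<union> Ti s i))\<^sup>*)"
  proof (intro allI)
    fix i show "i \<le> length s \<longrightarrow> AB (E \<union> Ti s i) \<and>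
     (\<forall>k j. i \<le> k \<longrightarrow> k < length s \<longrightarrow> j < length s \<longrightarrow> j \<noteq> k \<longrightarrow> (s!k, s!j) \<notin> (adj (E \<union> Ti s i))\<^sup>*)"
    proof (induction i)
      case 0 then show ?case using ab sep by (simp add: Ti_0)
    next
      case (Suc i)
      show ?case
      proof
        assume si: "Suc i \<le> length s"
        with Suc.IH have ab': "AB (E \<union> Ti s i)" and
          sep': "\<forall>k j. i \<le> k \<longrightarrow> k < length s \<longrightarrow> j < length s \<longrightarrow> j \<noteq> k \<longrightarrow> (s!k, s!j) \<notin> (adj (E \<union> Ti s i))\<^sup>*"
          by auto
        show "AB (E \<union> Ti s (Suc i)) \<and>
          (\<forall>k j. Suc i \<le> k \<longrightarrow> k < length s \<longrightarrow> j < length s \<longrightarrow> j \<noteq> k \<longrightarrow> (s!k, s!j) \<notin> (adj (E \<union> Ti s (Suc i)))\<^sup>*)"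
        proof (cases "i = 0")
          case True
          then show ?thesis using ab' sep' by (simp add: Ti_0 Ti_1)
        next
          case False
          let ?p = "(i - 1) div 2"
          have pi: "?p < i" using False by auto
          have eq: "E \<union> Ti s (Suc i) = insert {s!i, s!?p} (E \<union> Ti s i)"
            using False Ti_Suc by auto
          have ne: "s!i \<noteq> s!?p" using d pi si nth_eq_iff_index_eq[OF d, of i ?p] by auto
          have nc: "(s!i, s!?p) \<notin> (adj (E \<union> Ti s i))\<^sup>*" using sep' pi si by auto
          have "AB (E \<union> Ti s (Suc i))" unfolding eq by (rule AB_insert[OF ab' nc ne])
          moreover have "\<forall>k j. Suc i \<le> k \<longrightarrow> k < length s \<longrightarrow> j < length s \<longrightarrow> j \<noteq> k \<longrightarrow> (s!k, s!j) \<notin> (adj (E \<union> Ti s (Suc i)))\<^sup>*"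
          proof (intro allI impI)
            fix k j assume kj: "Suc i \<le> k" "k < length s" "j < length s" "j \<noteq> k"
            show "(s!k, s!j) \<notin> (adj (E \<union> Ti s (Suc i)))\<^sup>*"
            proof
              assume "(s!k, s!j) \<in> (adj (E \<union> Ti s (Suc i)))\<^sup>*"
              then have "(s!k, s!j) \<in> (adj (E \<union> Ti s i))\<^sup>* \<or> (s!k, s!i) \<in> (adj (E \<union> Ti s i))\<^sup>* \<or> (s!k, s!?p) \<in> (adj (E \<union> Ti s i))\<^sup>*"
                unfolding eq using reach_insert by metis
              moreover have "i < length s" "?p < length s" "i \<noteq> k" "?p \<noteq> k" using kj pi si by auto
              ultimately show False using sep' kj by (metis le_SucI Suc_leD)
            qed
          qed
          ultimately show ?thesis by blast
        qed
      qed
    qed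
  qed
  then show ?thesis using Ti_full by (metis le_refl)
qed


definition Inv :: "'a dash_state \<Rightarrow> bool" where
  "Inv st \<longleftrightarrow> wf_graph (nodes st) (gedges st) \<and> wf_graph (nodes st) (hedges st) \<and> AB (hedges st) \<and>
     (\<forall>x y. (x,y) \<in> (adj (hedges st))\<^sup>* \<longrightarrow> cid st x = cid st y)"

lemma wf_mem: "wf_graph V E \<Longrightarrow> {a,b} \<in> E \<Longrightarrow> a \<noteq> b \<Longrightarrow> a \<in> V \<and> b \<in> V"
proof -
  assume "wf_graph V E" "{a,b} \<in> E"
  then obtain x y where "{a,b} = {x,y}" "x \<in> V" "y \<in> V" unfolding wf_graph_def by blast
  moreover have "a \<in> {a,b}" "b \<in> {a,b}" by auto
  ultimately show ?thesis by auto
qed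

lemma tree_edges_mem: "e \<in> tree_edges s \<Longrightarrow> \<exists>a b. e = {a,b} \<and> a \<in> set s \<and> b \<in> set s \<and> (distinct s \<longrightarrow> a \<noteq> b)"
proof -
  assume "e \<in> tree_edges s"
  then obtain i where i: "e = {s!i, s!((i-1) div 2)}" "0 < i" "i < length s" by (auto simp: tree_edges_def)
  have p: "(i-1) div 2 < i" using i by auto
  then have p2: "(i-1) div 2 < length s" using i by linarith
  have m: "s!i \<in> set s" "s!((i-1) div 2) \<in> set s" using i p2 by simp_all
  have "distinct s \<longrightarrow> s!i \<noteq> s!((i-1) div 2)"
  proof
    assume d: "distinct s"
    show "s!i \<noteq> s!((i-1) div 2)" using nth_eq_iff_index_eq[OF d i(3) p2] p by simp
  qed
  then show ?thesis using i m by blast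
qed

lemma reach_from_outside: "wf_graph V E \<Longrightarrow> x \<notin> V \<Longrightarrow> (x,y) \<in> (adj E)\<^sup>* \<Longrightarrow> y = x"
  by (erule converse_rtranclE) (auto simp: adj_def dest: wf_mem)

lemma step_inv:
  assumes inv: "Inv st" and stp: "dash_step E0 init st v st'"
  shows "Inv st'"
proof -
  obtain Un_set s where v: "v \<in> nodes st"
    and UN: "is_UN {u\<in>nbrs (gedges st) v. cid st u \<noteq> cid st v} (cid st) init Un_set"
    and ds: "distinct s" and ss: "set s = Un_set \<union> nbrs (hedges st) v"
    and st': "st' = \<lparr>nodes = nodes st - {v}, gedges = {e\<in>gedges st. v\<notin>e} \<union> tree_edges s,
       hedges = {e\<in>hedges st. v\<notin>e} \<union> tree_edges s,
       cid = (\<lambda>u. if u \<in> {u\<in>nodes st - {v}. \<exists>w\<in>Un_set \<union> nbrs (hedges st) v.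
                  (w,u) \<in> (adj ({e\<in>hedges st. v\<notin>e} \<union> tree_edges s))\<^sup>*}
               then Min (cid st ` (Un_set \<union> nbrs (hedges st) v)) else cid st u)\<rparr>"
    using stp unfolding dash_step_def Let_def apply - apply (elim conjE exE) apply (rule that) apply assumption+ done
  define G where "G = gedges st"
  define H where "H = hedges st"
  define idf where "idf = cid st"
  define V' where "V' = nodes st - {v}"
  define Hv where "Hv = {e\<in>H. v\<notin>e}"
  define S where "S = Un_set \<union> nbrs H v"
  define H' where "H' = Hv \<union> tree_edges s"
  define comp where "comp = {u\<in>V'. \<exists>w\<in>S. (w,u) \<in> (adj H')\<^sup>*}"
  have wfG: "wf_graph (nodes st) G" and wfH: "wf_graph (nodes st) H" and abH: "AB H"
    and idH: "\<And>x y. (x,y) \<in> (adj H)\<^sup>* \<Longrightarrow> idf x = idf y"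
    using inv by (auto simp: Inv_def G_def H_def idf_def)
  have UNsub: "Un_set \<subseteq> nbrs G v" and UNinj: "\<And>w1 w2. w1 \<in> Un_set \<Longrightarrow> w2 \<in> Un_set \<Longrightarrow> idf w1 = idf w2 \<Longrightarrow> w1 = w2"
    and UNv: "\<And>w. w \<in> Un_set \<Longrightarrow> idf w \<noteq> idf v"
    using UN unfolding is_UN_def G_def idf_def by auto
  have SV': "S \<subseteq> V'"
  proof
    fix u assume "u \<in> S"
    then have "u \<in> nbrs G v \<or> u \<in> nbrs H v" using UNsub S_def by auto
    then show "u \<in> V'" unfolding nbrs_def V'_def using wf_mem[OF wfG, of v u] wf_mem[OF wfH, of v u] by auto
  qed
  have sS: "set s = S" using ss S_def H_def by simp
  have HvH: "Hv \<subseteq> H" by (auto simp: Hv_def)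
  have wfHv: "wf_graph V' Hv" using wfH unfolding wf_graph_def Hv_def V'_def by blast
  have wfT: "wf_graph V' (tree_edges s)" unfolding wf_graph_def
    using tree_edges_mem ds sS SV' by blast
  have wfH': "wf_graph V' H'" using wfHv wfT unfolding wf_graph_def H'_def by blast
  have wfGv: "wf_graph V' {e\<in>G. v\<notin>e}" unfolding wf_graph_def
  proof
    fix e assume e: "e \<in> {e\<in>G. v\<notin>e}"
    then obtain x y where "x \<noteq> y" "e = {x,y}" "x \<in> nodes st" "y \<in> nodes st"
      using wfG unfolding wf_graph_def by blast
    then show "\<exists>x y. x \<noteq> y \<and> e = {x, y} \<and> x \<in> V' \<and> y \<in> V'" using e unfolding V'_def by blast
  qed
  have wfG': "wf_graph V' ({e\<in>G. v\<notin>e} \<union> tree_edges s)" using wfGv wfT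
    unfolding wf_graph_def by blast
  have sep: "\<And>u w. u \<in> S \<Longrightarrow> w \<in> S \<Longrightarrow> u \<noteq> w \<Longrightarrow> (u,w) \<notin> (adj Hv)\<^sup>*"
  proof
    fix u w assume u: "u \<in> S" and w: "w \<in> S" and uw: "u \<noteq> w" and r: "(u,w) \<in> (adj Hv)\<^sup>*"
    have rH: "(u,w) \<in> (adj H)\<^sup>*" using reach_mono[OF HvH r] .
    have nv: "\<And>x. x \<in> nbrs H v \<Longrightarrow> idf x = idf v"
    proof -
      fix x assume "x \<in> nbrs H v"
      then have "(v,x) \<in> adj H" by (auto simp: nbrs_def adj_def)
      then show "idf x = idf v" using idH by (metis r_into_rtrancl)
    qed
    show False
    proof (cases "u \<in> Un_set")
      case uU: True
      show False
      proof (cases "w \<in> Un_set")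
        case True then show False using UNinj[OF uU True idH[OF rH]] uw by blast
      next
        case False then have wN: "w \<in> nbrs H v" using w S_def by auto
        show False using idH[OF rH] nv[OF wN] UNv[OF uU] by simp
      qed
    next
      case False then have uN: "u \<in> nbrs H v" using u S_def by auto
      show False
      proof (cases "w \<in> Un_set")
        case True then show False using idH[OF rH] nv[OF uN] UNv[OF True] by simp
      next
        case False then have wN: "w \<in> nbrs H v" using w S_def by auto
        define e where "e = {v,u}"
        have eH: "e \<in> H" and vu: "v \<noteq> u" using uN by (auto simp: nbrs_def e_def)
        have "{v,w} \<in> H - {e}" "v \<noteq> w" using wN uw by (auto simp: nbrs_def e_def doubleton_eq_iff)
        then have r1: "(w,v) \<in> (adj (H - {e}))\<^sup>*" by (intro r_into_rtrancl) (simp add: adj_def insert_commute)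
        have "Hv \<subseteq> H - {e}" by (auto simp: Hv_def e_def)
        then have r2: "(u,w) \<in> (adj (H - {e}))\<^sup>*" using reach_mono r by metis
        have "(v,u) \<in> (adj (H - {e}))\<^sup>*" using rtrancl_trans[OF reach_sym[OF r1] reach_sym[OF r2]] .
        then show False using abH[unfolded AB_def, rule_format, OF eH e_def vu] by blast
      qed
    qed
  qed
  have abHv: "AB Hv" unfolding AB_def
  proof (intro ballI allI impI notI)
    fix e x y assume e: "e \<in> Hv" "e = {x,y}" "x \<noteq> y" and r: "(x,y) \<in> (adj (Hv - {e}))\<^sup>*"
    have "Hv - {e} \<subseteq> H - {e}" using HvH by auto
    then have "(x,y) \<in> (adj (H - {e}))\<^sup>*" using reach_mono r by metis
    moreover have "e \<in> H" using e HvH by blast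
    ultimately show False using abH[unfolded AB_def, rule_format, of e x y] e by blast
  qed
  have abH': "AB H'" unfolding H'_def
  proof (rule tree_add[OF abHv ds])
    show "\<forall>k j. k < length s \<longrightarrow> j < length s \<longrightarrow> j \<noteq> k \<longrightarrow> (s!k, s!j) \<notin> (adj Hv)\<^sup>*"
    proof (intro allI impI)
      fix k j assume kj: "k < length s" "j < length s" "j \<noteq> k"
      have "s!k \<in> S" "s!j \<in> S" using kj sS nth_mem by blast+
      moreover have "s!k \<noteq> s!j" using nth_eq_iff_index_eq[OF ds kj(1,2)] kj(3) by simp
      ultimately show "(s!k, s!j) \<notin> (adj Hv)\<^sup>*" using sep by blast
    qed
  qed
  define m where "m = Min (idf ` S)"
  define cid' where "cid' = (\<lambda>u. if u \<in> comp then m else idf u)"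
  have outside: "\<And>x y. (x,y) \<in> (adj H')\<^sup>* \<Longrightarrow> (x,y) \<in> (adj Hv)\<^sup>* \<or> (\<exists>w\<in>S. (w,x) \<in> (adj H')\<^sup>*)"
  proof -
    fix x y assume "(x,y) \<in> (adj H')\<^sup>*"
    then show "(x,y) \<in> (adj Hv)\<^sup>* \<or> (\<exists>w\<in>S. (w,x) \<in> (adj H')\<^sup>*)"
    proof (induction rule: rtrancl_induct)
      case base then show ?case by simp
    next
      case (step y z)
      from step.hyps(2) have yz: "{y,z} \<in> H'" "y \<noteq> z" by (auto simp: adj_def)
      show ?case
      proof (cases "{y,z} \<in> Hv")
        case True
        then have "(y,z) \<in> adj Hv" using yz by (simp add: adj_def)
        then show ?thesis using step.IH by (meson rtrancl.rtrancl_into_rtrancl)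
      next
        case False
        then have "{y,z} \<in> tree_edges s" using yz H'_def by auto
        then have "y \<in> S" using tree_edges_mem sS by (metis doubleton_eq_iff)
        moreover have "(x,y) \<in> (adj Hv)\<^sup>* \<Longrightarrow> (y,x) \<in> (adj H')\<^sup>*"
          by (rule reach_sym, rule reach_mono[of Hv]) (auto simp: H'_def)
        ultimately show ?thesis using step.IH by blast
      qed
    qed
  qed
  have idH': "\<And>x y. (x,y) \<in> (adj H')\<^sup>* \<Longrightarrow> cid' x = cid' y"
  proof -
    fix x y assume r: "(x,y) \<in> (adj H')\<^sup>*"
    show "cid' x = cid' y"
    proof (cases "x = y")
      case True then show ?thesis by simp
    next
      case xy: False
      have xV: "x \<in> V'" using reach_from_outside[OF wfH' _ r] xy by blast
      have yV: "y \<in> V'" using reach_from_outside[OF wfH' _ reach_sym[OF r]] xy by blast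
      have ry: "(y,x) \<in> (adj H')\<^sup>*" using reach_sym[OF r] .
      have c1: "y \<in> comp" if xc: "x \<in> comp"
      proof -
        from xc obtain w where "w \<in> S" "(w,x) \<in> (adj H')\<^sup>*" unfolding comp_def by blast
        then have "w \<in> S" "(w,y) \<in> (adj H')\<^sup>*" using rtrancl_trans[OF _ r] by blast+
        then show ?thesis using yV unfolding comp_def by blast
      qed
      have c2: "x \<in> comp" if yc: "y \<in> comp"
      proof -
        from yc obtain w where "w \<in> S" "(w,y) \<in> (adj H')\<^sup>*" unfolding comp_def by blast
        then have "w \<in> S" "(w,x) \<in> (adj H')\<^sup>*" using rtrancl_trans[OF _ ry] by blast+
        then show ?thesis using xV unfolding comp_def by blast
      qed
      have nc: "idf x = idf y" if xn: "x \<notin> comp"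
      proof -
        have "\<not> (\<exists>w\<in>S. (w,x) \<in> (adj H')\<^sup>*)" using xV xn unfolding comp_def by blast
        then have "(x,y) \<in> (adj Hv)\<^sup>*" using outside[OF r] by blast
        then show "idf x = idf y" using idH[OF reach_mono[OF HvH]] by blast
      qed
      show ?thesis
      proof (cases "x \<in> comp")
        case True then show ?thesis using c1 unfolding cid'_def by simp
      next
        case False then show ?thesis using c2 nc unfolding cid'_def by auto
      qed
    qed
  qed
  have st'': "st' = \<lparr>nodes = V', gedges = {e\<in>G. v\<notin>e} \<union> tree_edges s, hedges = H', cid = cid'\<rparr>"
    unfolding st' cid'_def comp_def m_def V'_def H'_def Hv_def S_def G_def H_def idf_def by (rule refl)
  have idH'': "\<forall>x y. (x,y) \<in> (adj H')\<^sup>* \<longrightarrow> cid' x = cid' y" using idH' by blast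
  show ?thesis unfolding st'' Inv_def dash_state.simps using wfG' wfH' abH' idH'' by (intro conjI)
qed


lemma Inv_init: "wf_graph V0 E0 \<Longrightarrow> Inv \<lparr>nodes = V0, gedges = E0, hedges = {}, cid = init\<rparr>"
proof -
  assume wf: "wf_graph V0 E0"
  have a: "adj ({}::'a set set) = {}" by (simp add: adj_def)
  have "(x,y) \<in> (adj ({}::'a set set))\<^sup>* \<Longrightarrow> x = y" for x y :: 'a unfolding a by simp
  moreover have "wf_graph V0 ({}::'a set set)" by (simp add: wf_graph_def)
  moreover have "AB ({}::'a set set)" by (simp add: AB_def)
  ultimately show ?thesis using wf unfolding Inv_def by auto
qed

lemma reach_Inv: "dash_reach V0 E0 init st \<Longrightarrow> wf_graph V0 E0 \<Longrightarrow> Inv st"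
proof (induction rule: dash_reach.induct)
  case init
  then show ?case by (rule Inv_init)
next
  case (step st v st')
  have "Inv st" using step.IH step.prems by blast
  then show ?case by (rule step_inv[OF _ step.hyps(2)])
qed

theorem lemma1:
  fixes V0 :: "'a set" and E0 :: "'a set set" and init :: "'a \<Rightarrow> real"
    and st :: "'a dash_state"
  assumes "finite V0"
    and "wf_graph V0 E0"
    and "connected_graph V0 E0"
    and "\<forall>x\<in>V0. 0 \<le> init x \<and> init x \<le> 1"
    and "dash_reach V0 E0 init st"
  shows "is_forest (nodes st) (hedges st)"
proof -
  have "Inv st" using reach_Inv[OF assms(5,2)] .
  then have wf: "wf_graph (nodes st) (hedges st)" and ab: "AB (hedges st)" unfolding Inv_def by blast+
  have "\<not> (\<exists>c. is_cycle (hedges st) c)" using cycle_not_AB ab by blast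
  then show ?thesis unfolding is_forest_def using wf by blast
qed

end
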